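(* Let $r\geq 3$. If a $3$-connected $r$-graph $G$ has a $3$-vertex-cut $S$ such that $G-S$ contains at least three components of odd order, then either $G$ has a non-trivial tight edge-cut or the underlying simple graph $G_s$ is isomorphic to $K_{3,3}$.
   Context: Graphs are finite, may have parallel edges but no loops. $\partial_G(X)$ is the set of edges with exactly one end in $X\subseteq V(G)$. An $r$-graph is an $r$-regular graph $G$ with $|\partial_G(X)|\geq r$ for every $X\subseteq V(G)$ of odd cardinality. An edge-cut $\partial_G(X)$ of an $r$-graph $G$ is a non-trivial tight edge-cut if $|X|$ is odd, $|\partial_G(X)|=r$, and $|X|>1$ and $|V(G)\setminus X|>1$. $G_s$ is the underlying simple graph of $G$. A $3$-vertex-cut is a set of $3$ vertices whose removal increases the number of components. *)

theory Defs
  imports Main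
begin

text \<open>Parallel edges are
  distinct elements of E with the same ends.\<close>

definition multigraph :: "'a set \<Rightarrow> 'b set \<Rightarrow> ('b \<Rightarrow> 'a set) \<Rightarrow> bool" where
  "multigraph V E ends \<longleftrightarrow> finite V \<and> finite E \<and>
     (\<forall>e\<in>E. ends e \<subseteq> V \<and> card (ends e) = 2)"

definition degree :: "'b set \<Rightarrow> ('b \<Rightarrow> 'a set) \<Rightarrow> 'a \<Rightarrow> nat" where
  "degree E ends v = card {e\<in>E. v \<in> ends e}"

definition edge_cut :: "'b set \<Rightarrow> ('b \<Rightarrow> 'a set) \<Rightarrow> 'a set \<Rightarrow> 'b set" where
  "edge_cut E ends X = {e\<in>E. card (ends e \<inter> X) = 1}"

definition r_graph :: "nat \<Rightarrow> 'a set \<Rightarrow> 'b set \<Rightarrow> ('b \<Rightarrow> 'a set) \<Rightarrow> bool" where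
  "r_graph r V E ends \<longleftrightarrow> multigraph V E ends \<and>
     (\<forall>v\<in>V. degree E ends v = r) \<and>
     (\<forall>X. X \<subseteq> V \<longrightarrow> odd (card X) \<longrightarrow> card (edge_cut E ends X) \<ge> r)"

definition nontrivial_tight_cut :: "nat \<Rightarrow> 'a set \<Rightarrow> 'b set \<Rightarrow> ('b \<Rightarrow> 'a set) \<Rightarrow> 'a set \<Rightarrow> bool" where
  "nontrivial_tight_cut r V E ends X \<longleftrightarrow> X \<subseteq> V \<and> odd (card X) \<and>
     card (edge_cut E ends X) = r \<and> card X > 1 \<and> card (V - X) > 1"

definition adj :: "'b set \<Rightarrow> ('b \<Rightarrow> 'a set) \<Rightarrow> 'a \<Rightarrow> 'a \<Rightarrow> bool" where
  "adj E ends u v \<longleftrightarrow> (\<exists>e\<in>E. ends e = {u, v})"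

definition reach_in :: "'b set \<Rightarrow> ('b \<Rightarrow> 'a set) \<Rightarrow> 'a set \<Rightarrow> ('a \<times> 'a) set" where
  "reach_in E ends W = {(u, v). u \<in> W \<and> v \<in> W \<and> adj E ends u v}\<^sup>*"

definition components :: "'b set \<Rightarrow> ('b \<Rightarrow> 'a set) \<Rightarrow> 'a set \<Rightarrow> 'a set set" where
  "components E ends W = (\<lambda>x. {y\<in>W. (x, y) \<in> reach_in E ends W}) ` W"

definition connected_on :: "'b set \<Rightarrow> ('b \<Rightarrow> 'a set) \<Rightarrow> 'a set \<Rightarrow> bool" where
  "connected_on E ends W \<longleftrightarrow> card (components E ends W) = 1"

definition k_connected :: "nat \<Rightarrow> 'a set \<Rightarrow> 'b set \<Rightarrow> ('b \<Rightarrow> 'a set) \<Rightarrow> bool" where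
  "k_connected k V E ends \<longleftrightarrow> card V > k \<and>
     (\<forall>S. S \<subseteq> V \<longrightarrow> card S < k \<longrightarrow> connected_on E ends (V - S))"

definition three_vertex_cut :: "'a set \<Rightarrow> 'b set \<Rightarrow> ('b \<Rightarrow> 'a set) \<Rightarrow> 'a set \<Rightarrow> bool" where
  "three_vertex_cut V E ends S \<longleftrightarrow> S \<subseteq> V \<and> card S = 3 \<and>
     card (components E ends (V - S)) > card (components E ends V)"

definition simple_is_K33 :: "'a set \<Rightarrow> 'b set \<Rightarrow> ('b \<Rightarrow> 'a set) \<Rightarrow> bool" where
  "simple_is_K33 V E ends \<longleftrightarrow> (\<exists>A B. A \<inter> B = {} \<and> A \<union> B = V \<and> card A = 3 \<and> card B = 3 \<and>
     (\<forall>u\<in>V. \<forall>v\<in>V. adj E ends u v \<longleftrightarrow> (u \<in> A \<and> v \<in> B) \<or> (u \<in> B \<and> v \<in> A)))"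

end

theory Submission
  imports Defs
begin

lemma adj_sym: "adj E ends u v \<Longrightarrow> adj E ends v u"
  by (auto simp: adj_def insert_commute)

lemma reach_sym:
  assumes "(x,y) \<in> reach_in E ends W"
  shows "(y,x) \<in> reach_in E ends W"
proof -
  let ?R = "{(u, v). u \<in> W \<and> v \<in> W \<and> adj E ends u v}"
  have c: "?R\<inverse> = ?R"
  proof (rule set_eqI)
    fix p :: "'a \<times> 'a"
    show "p \<in> ?R\<inverse> \<longleftrightarrow> p \<in> ?R"
      by (cases p) (auto intro: adj_sym)
  qed
  have "(y,x) \<in> (?R\<inverse>)\<^sup>*" using assms unfolding reach_in_def by (rule rtrancl_converseI)
  then show ?thesis unfolding reach_in_def using c by simp
qed

lemma reach_trans:
  "(x,y) \<in> reach_in E ends W \<Longrightarrow> (y,z) \<in> reach_in E ends W \<Longrightarrow> (x,z) \<in> reach_in E ends W"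
  unfolding reach_in_def by (rule rtrancl_trans)

lemma comp_closed:
  assumes "C \<in> components E ends W" "u \<in> C" "w \<in> W" "adj E ends u w"
  shows "w \<in> C"
proof -
  obtain x where x: "x \<in> W" "C = {y\<in>W. (x, y) \<in> reach_in E ends W}"
    using assms(1) unfolding components_def by auto
  have xu: "(x,u) \<in> reach_in E ends W" and uW: "u \<in> W" using x assms(2) by auto
  have uw: "(u,w) \<in> reach_in E ends W"
    unfolding reach_in_def using assms(3,4) uW by auto
  have "(x,w) \<in> reach_in E ends W" using reach_trans[OF xu uw] .
  then show ?thesis using x assms(3) by simp
qed

lemma comp_sub: "C \<in> components E ends W \<Longrightarrow> C \<subseteq> W"
  unfolding components_def by auto

lemma comp_disj:
  assumes "C1 \<in> components E ends W" "C2 \<in> components E ends W" "z \<in> C1" "z \<in> C2"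
  shows "C1 = C2"
proof -
  obtain x1 where x1: "x1 \<in> W" "C1 = {y\<in>W. (x1, y) \<in> reach_in E ends W}"
    using assms(1) unfolding components_def by auto
  obtain x2 where x2: "x2 \<in> W" "C2 = {y\<in>W. (x2, y) \<in> reach_in E ends W}"
    using assms(2) unfolding components_def by auto
  have a: "(x1,z) \<in> reach_in E ends W" "(x2,z) \<in> reach_in E ends W" using x1 x2 assms by auto
  have b: "(z,x2) \<in> reach_in E ends W" "(z,x1) \<in> reach_in E ends W" using reach_sym[OF a(2)] reach_sym[OF a(1)] by auto
  have 1: "(x1,x2) \<in> reach_in E ends W" using reach_trans[OF a(1) b(1)] .
  have 2: "(x2,x1) \<in> reach_in E ends W" using reach_trans[OF a(2) b(2)] .
  have "(x2,y) \<in> reach_in E ends W" if "(x1,y) \<in> reach_in E ends W" for y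
    using reach_trans[OF 2 that] .
  moreover have "(x1,y) \<in> reach_in E ends W" if "(x2,y) \<in> reach_in E ends W" for y
    using reach_trans[OF 1 that] .
  ultimately show ?thesis unfolding x1(2) x2(2) by auto
qed

lemma comp_self:
  assumes "x \<in> W"
  shows "{y\<in>W. (x, y) \<in> reach_in E ends W} \<in> components E ends W"
    and "x \<in> {y\<in>W. (x, y) \<in> reach_in E ends W}"
proof -
  show "{y\<in>W. (x, y) \<in> reach_in E ends W} \<in> components E ends W"
    unfolding components_def using assms by (rule image_eqI[rotated]) simp
  show "x \<in> {y\<in>W. (x, y) \<in> reach_in E ends W}"
    unfolding reach_in_def using assms by simp
qed

lemma not_conn:
  assumes "D \<subseteq> W" "x \<in> D" "y \<in> W" "y \<notin> D"
    and cl: "\<forall>u\<in>D. \<forall>w\<in>W. adj E ends u w \<longrightarrow> w \<in> D"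
  shows "\<not> connected_on E ends W"
proof
  assume con: "connected_on E ends W"
  have r: "z \<in> D" if "(x,z) \<in> reach_in E ends W" for z
    using that unfolding reach_in_def
  proof (induction rule: rtrancl_induct)
    case base
    then show ?case using assms(2) .
  next
    case (step a b)
    then have "a \<in> D" "b \<in> W" "adj E ends a b" by auto
    then show ?case using cl by blast
  qed
  let ?Cx = "{z\<in>W. (x, z) \<in> reach_in E ends W}"
  let ?Cy = "{z\<in>W. (y, z) \<in> reach_in E ends W}"
  have h1: "?Cx \<in> components E ends W"
    using comp_self(1)[OF subsetD[OF assms(1) assms(2)]] .
  have h2: "?Cy \<in> components E ends W"
    using comp_self(1)[OF assms(3)] .
  have h3: "y \<in> ?Cy" using comp_self(2)[OF assms(3)] .
  have h4: "y \<notin> ?Cx" using r assms(4) by blast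
  have "\<exists>a. components E ends W = {a}"
    using con unfolding connected_on_def by (metis One_nat_def card_1_singleton_iff)
  then obtain a where a: "components E ends W = {a}" by (elim exE)
  have "?Cx = a" using h1 a by simp
  moreover have "?Cy = a" using h2 a by simp
  ultimately have "?Cx = ?Cy" by simp
  then show False using h3 h4 by simp
qed

lemma double_count:
  assumes "finite E" "finite S"
  shows "(\<Sum>s\<in>S. degree E ends s) = (\<Sum>e\<in>E. card (ends e \<inter> S))"
proof -
  have "(\<Sum>s\<in>S. degree E ends s) = (\<Sum>s\<in>S. \<Sum>e\<in>E. of_bool (s \<in> ends e))"
    unfolding degree_def using assms by (simp add: Int_def)
  also have "\<dots> = (\<Sum>e\<in>E. \<Sum>s\<in>S. of_bool (s \<in> ends e))" by (rule sum.swap)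
  also have "\<dots> = (\<Sum>e\<in>E. card (ends e \<inter> S))"
    using assms by (simp add: Int_commute Int_def)
  finally show ?thesis .
qed

theorem lemma2p6:
  fixes r :: nat and V :: "'a set" and E :: "'b set" and ends :: "'b \<Rightarrow> 'a set" and S :: "'a set"
  assumes "r \<ge> 3"
    and "r_graph r V E ends"
    and "k_connected 3 V E ends"
    and "three_vertex_cut V E ends S"
    and "card {C \<in> components E ends (V - S). odd (card C)} \<ge> 3"
  shows "(\<exists>X. nontrivial_tight_cut r V E ends X) \<or> simple_is_K33 V E ends"
proof -
  have finV: "finite V" and finE: "finite E" and ends2: "\<And>e. e \<in> E \<Longrightarrow> ends e \<subseteq> V \<and> card (ends e) = 2"
    and deg: "\<And>v. v \<in> V \<Longrightarrow> degree E ends v = r"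
    and cutr: "\<And>X. X \<subseteq> V \<Longrightarrow> odd (card X) \<Longrightarrow> card (edge_cut E ends X) \<ge> r"
    using assms(2) unfolding r_graph_def multigraph_def by auto
  have SV: "S \<subseteq> V" and cS: "card S = 3" using assms(4) unfolding three_vertex_cut_def by auto
  have finS: "finite S" using SV finV finite_subset by blast
  have conn: "\<And>T. T \<subseteq> V \<Longrightarrow> card T < 3 \<Longrightarrow> connected_on E ends (V - T)"
    using assms(3) unfolding k_connected_def by auto
  define K where "K = {C \<in> components E ends (V - S). odd (card C)}"
  define U where "U = \<Union> ((edge_cut E ends) ` K)"
  have Kcomp: "\<And>C. C \<in> K \<Longrightarrow> C \<in> components E ends (V - S)" unfolding K_def by auto
  have KsubV: "\<And>C. C \<in> K \<Longrightarrow> C \<subseteq> V - S" using Kcomp comp_sub by blast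
  have Kodd: "\<And>C. C \<in> K \<Longrightarrow> odd (card C)" unfolding K_def by auto
  have finK: "finite K" 
  proof (rule finite_subset)
    show "K \<subseteq> Pow V" using KsubV by blast
    show "finite (Pow V)" using finV by simp
  qed
  have cK: "card K \<ge> 3" using assms(5) unfolding K_def .
  have edge_shape: "\<exists>a b. ends e = {a,b} \<and> a \<in> C \<and> b \<in> S \<and> a \<notin> S \<and> e \<in> E"
    if C: "C \<in> components E ends (V - S)" and e: "e \<in> edge_cut E ends C" for C e
  proof -
    have eE: "e \<in> E" and c1: "card (ends e \<inter> C) = 1" using e unfolding edge_cut_def by auto
    obtain a where a: "ends e \<inter> C = {a}" using c1 by (metis One_nat_def card_1_singleton_iff)
    obtain x y where xy: "x \<noteq> y" "ends e = {x,y}" using ends2[OF eE] by (metis card_2_iff)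
    define b where "b = (if a = x then y else x)"
    have eab: "ends e = {a,b}" "a \<noteq> b" using a xy b_def by auto
    have bC: "b \<notin> C" using a eab by auto
    have bV: "b \<in> V" using ends2[OF eE] eab by auto
    have aC: "a \<in> C" using a by auto
    have aS: "a \<notin> S" using aC comp_sub[OF C] by auto
    have "b \<in> S"
    proof (rule ccontr)
      assume "b \<notin> S"
      hence "b \<in> V - S" using bV by auto
      moreover have "adj E ends a b" unfolding adj_def using eE eab by auto
      ultimately have "b \<in> C" using comp_closed[OF C aC] by auto
      thus False using bC by auto
    qed
    thus ?thesis using eab aC aS eE by blast
  qed
  have UE: "U \<subseteq> E" unfolding U_def edge_cut_def by auto
  have finU: "finite U" using UE finE finite_subset by blast
  have cutS1: "card (ends e \<inter> S) = 1" if eU: "e \<in> U" for e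
  proof -
    obtain C where "C \<in> K" "e \<in> edge_cut E ends C" using eU unfolding U_def by blast
    then obtain a b where "ends e = {a,b}" "b \<in> S" "a \<notin> S" using edge_shape Kcomp by blast
    hence "ends e \<inter> S = {b}" by auto
    thus ?thesis by simp
  qed
  have disj_cuts: "edge_cut E ends C1 \<inter> edge_cut E ends C2 = {}"
    if hC: "C1 \<in> K" "C2 \<in> K" "C1 \<noteq> C2" for C1 C2
  proof (rule ccontr)
    assume "edge_cut E ends C1 \<inter> edge_cut E ends C2 \<noteq> {}"
    then obtain e where e1: "e \<in> edge_cut E ends C1" and e2: "e \<in> edge_cut E ends C2" by auto
    obtain a b where ab: "ends e = {a,b}" "a \<in> C1" "b \<in> S" using edge_shape[OF Kcomp[OF hC(1)] e1] by blast
    have "card (ends e \<inter> C2) = 1" using e2 unfolding edge_cut_def by auto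
    then have "ends e \<inter> C2 \<noteq> {}" by (metis card.empty zero_neq_one)
    then obtain z where "z \<in> ends e \<inter> C2" by (meson ex_in_conv)
    moreover have "b \<notin> C2" using KsubV[OF hC(2)] ab by auto
    ultimately have "a \<in> C2" using ab by auto
    thus False using comp_disj[OF Kcomp[OF hC(1)] Kcomp[OF hC(2)] ab(2)] hC(3) by auto
  qed
  have fincut: "\<And>C. finite (edge_cut E ends C)" using finE unfolding edge_cut_def by auto
  have cardU: "card U = (\<Sum>C\<in>K. card (edge_cut E ends C))"
    unfolding U_def using finK fincut disj_cuts by (intro card_UN_disjoint) auto
  have geq: "\<And>C. C \<in> K \<Longrightarrow> card (edge_cut E ends C) \<ge> r"
    using cutr KsubV Kodd by blast
  have Ulow: "card U \<ge> card K * r"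
  proof -
    have "card K * r = (\<Sum>C\<in>K. r)" by simp
    also have "\<dots> \<le> (\<Sum>C\<in>K. card (edge_cut E ends C))" using geq by (rule sum_mono)
    finally show ?thesis using cardU by simp
  qed
  have tot: "(\<Sum>e\<in>E. card (ends e \<inter> S)) = 3 * r"
  proof -
    have "(\<Sum>s\<in>S. degree E ends s) = (\<Sum>s\<in>S. r)" using deg SV by (intro sum.cong) auto
    thus ?thesis using double_count[OF finE finS, of ends] cS by simp
  qed
  have split: "(\<Sum>e\<in>E. card (ends e \<inter> S)) = (\<Sum>e\<in>U. card (ends e \<inter> S)) + (\<Sum>e\<in>E-U. card (ends e \<inter> S))"
    using sum.subset_diff[OF UE finE] by (simp add: add.commute)
  have sU: "(\<Sum>e\<in>U. card (ends e \<inter> S)) = card U" using cutS1 by simp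
  have rpos: "r > 0" using assms(1) by simp
  have "card K * r \<le> 3 * r" using Ulow split sU tot by linarith
  hence cK3: "card K = 3" using cK rpos by simp
  have "card K * r = 3 * r" using cK3 by simp
  hence cU: "card U = 3 * r" using Ulow split sU tot by linarith
  have rest: "(\<Sum>e\<in>E-U. card (ends e \<inter> S)) = 0" using split sU tot cU by linarith
  have rest0: "ends e \<inter> S = {}" if "e \<in> E" "e \<notin> U" for e
  proof -
    have "card (ends e \<inter> S) = 0" using rest finE that by (simp add: sum_eq_0_iff)
    thus ?thesis using finS by simp
  qed
  have cut_eq: "card (edge_cut E ends C) = r" if C: "C \<in> K" for C
  proof (rule ccontr)
    assume "card (edge_cut E ends C) \<noteq> r"
    hence gt: "card (edge_cut E ends C) > r" using geq[OF C] by simp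
    have "(\<Sum>C\<in>K. card (edge_cut E ends C)) = card (edge_cut E ends C) + (\<Sum>C\<in>K-{C}. card (edge_cut E ends C))"
      using sum.remove[OF finK C] by simp
    moreover have "(\<Sum>C\<in>K-{C}. card (edge_cut E ends C)) \<ge> (\<Sum>C\<in>K-{C}. r)"
      using geq by (intro sum_mono) auto
    moreover have "(\<Sum>C\<in>K-{C}. r) = 2 * r" using cK3 C finK by simp
    ultimately have "card U > 3 * r" using cardU gt by linarith
    thus False using cU by simp
  qed
  show ?thesis
  proof (cases "\<exists>C\<in>K. card C > 1")
    case True
    then obtain C where C: "C \<in> K" "card C > 1" by blast
    have "S \<subseteq> V - C" using KsubV[OF C(1)] SV by auto
    hence "card (V - C) \<ge> 3" using cS finV by (metis card_mono finite_Diff)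
    hence "nontrivial_tight_cut r V E ends C"
      unfolding nontrivial_tight_cut_def using KsubV[OF C(1)] Kodd[OF C(1)] cut_eq[OF C(1)] C(2) by auto
    thus ?thesis by blast
  next
    case False
    have sing: "card C = 1" if hCK: "C \<in> K" for C
    proof -
      have "card C \<noteq> 0" using Kodd[OF hCK] by (metis odd_pos neq0_conv)
      moreover have "\<not> card C > 1" using False hCK by blast
      ultimately show ?thesis by linarith
    qed
    have Kcover: "V - S \<subseteq> \<Union>K"
    proof
      fix v assume vVS: "v \<in> V - S"
      define D where "D = {y\<in>V - S. (v, y) \<in> reach_in E ends (V - S)}"
      have DC: "D \<in> components E ends (V - S)" unfolding D_def by (rule comp_self(1)[OF vVS])
      have vD: "v \<in> D" unfolding D_def by (rule comp_self(2)[OF vVS])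
      show "v \<in> \<Union>K"
      proof (cases "D \<in> K")
        case True
        then show ?thesis using vD by blast
      next
        case DK: False
        obtain s where sS: "s \<in> S" using cS by (metis card.empty ex_in_conv zero_neq_numeral)
        have DVS: "D \<subseteq> V - S" using comp_sub[OF DC] .
        have cl: "\<forall>u\<in>D. \<forall>w\<in>V. adj E ends u w \<longrightarrow> w \<in> D"
        proof (intro ballI impI)
          fix u w assume uD: "u \<in> D" and wV: "w \<in> V" and uw: "adj E ends u w"
          show "w \<in> D"
          proof (cases "w \<in> S")
            case False
            then show ?thesis using comp_closed[OF DC uD] wV uw by blast
          next
            case wS: True
            obtain e where eE: "e \<in> E" and ee: "ends e = {u,w}" using uw unfolding adj_def by blast
            have "ends e \<inter> S \<noteq> {}" using ee wS by blast
            hence "e \<in> U" using rest0 eE by blast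
            then obtain C where CK: "C \<in> K" and eC: "e \<in> edge_cut E ends C" unfolding U_def by blast
            have "card (ends e \<inter> C) = 1" using eC unfolding edge_cut_def by simp
            hence "ends e \<inter> C \<noteq> {}" by (metis card.empty zero_neq_one)
            moreover have "w \<notin> C" using KsubV[OF CK] wS by blast
            ultimately have "u \<in> C" using ee by auto
            hence "C = D" using comp_disj[OF Kcomp[OF CK] DC _ uD] by blast
            thus ?thesis using CK DK by blast
          qed
        qed
        have "\<not> connected_on E ends V"
          by (rule not_conn[OF _ vD _ _ cl]) (use DVS sS SV in blast)+
        moreover have "connected_on E ends (V - {})" using conn[of "{}"] by simp
        ultimately show ?thesis by simp
      qed
    qed
    have KS: "\<Union>K \<subseteq> V - S" using KsubV by blast
    have B: "V - S = \<Union>K" by (rule subset_antisym[OF Kcover KS])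
    have singK: "\<exists>C\<in>K. C = {c}" if "c \<in> V - S" for c
    proof -
      have "c \<in> \<Union>K" using that B by simp
      then obtain C where CK: "C \<in> K" "c \<in> C" by (rule UnionE)
      have "card C = 1" using sing[OF CK(1)] .
      then obtain a where "C = {a}" by (metis One_nat_def card_1_singleton_iff)
      hence "C = {c}" using CK by simp
      thus ?thesis using CK by (intro bexI)
    qed
    have cardB: "card (V - S) = 3"
    proof -
      have "card (\<Union>K) = sum card K"
      proof (rule card_Union_disjoint)
        show "pairwise disjnt K" unfolding pairwise_def disjnt_def
        proof (intro ballI impI)
          fix C1 C2 assume h: "C1 \<in> K" "C2 \<in> K" "C1 \<noteq> C2"
          show "C1 \<inter> C2 = {}"
          proof (rule ccontr)
            assume "C1 \<inter> C2 \<noteq> {}"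
            then obtain z where "z \<in> C1" "z \<in> C2" by blast
            thus False using comp_disj[OF Kcomp[OF h(1)] Kcomp[OF h(2)]] h(3) by blast
          qed
        qed
        show "\<And>A. A \<in> K \<Longrightarrow> finite A" using KsubV finV by (meson finite_Diff finite_subset)
      qed
      also have "\<dots> = sum (\<lambda>C. 1) K" using sing by (intro sum.cong) auto
      also have "\<dots> = 3" using cK3 by simp
      finally show ?thesis by (simp only: B)
    qed
    have noSS: "\<not> adj E ends u v" if huv: "u \<in> S" "v \<in> S" for u v
    proof
      assume "adj E ends u v"
      then obtain e where eE: "e \<in> E" and ee: "ends e = {u,v}" unfolding adj_def by blast
      have "ends e \<inter> S \<noteq> {}" using ee huv by blast
      hence "e \<in> U" using rest0 eE by blast
      then obtain C where CK: "C \<in> K" and eC: "e \<in> edge_cut E ends C" unfolding U_def by blast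
      have "card (ends e \<inter> C) = 1" using eC unfolding edge_cut_def by simp
      moreover have "ends e \<inter> C = {}" using KsubV[OF CK] ee huv by auto
      ultimately show False by simp
    qed
    have noBB: "\<not> adj E ends u v" if huv: "u \<in> V - S" "v \<in> V - S" for u v
    proof
      assume uv: "adj E ends u v"
      then obtain e where eE: "e \<in> E" and ee: "ends e = {u,v}" unfolding adj_def by blast
      have "card (ends e) = 2" using ends2[OF eE] by blast
      hence uv': "u \<noteq> v" using ee by auto
      obtain C where CK: "C \<in> K" and Cu: "C = {u}" using singK[OF huv(1)] by blast
      have "v \<in> C" using comp_closed[OF Kcomp[OF CK] _ huv(2) uv] Cu by blast
      thus False using Cu uv' by blast
    qed
    have allBS: "adj E ends c s" if cB: "c \<in> V - S" and sS: "s \<in> S" for c s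
    proof (rule ccontr)
      assume nadj: "\<not> adj E ends c s"
      define T where "T = S - {s}"
      have TV: "T \<subseteq> V" using SV T_def by blast
      have cT: "card T < 3" unfolding T_def using cS sS finS by simp
      have con: "connected_on E ends (V - T)" using conn[OF TV cT] .
      obtain C where CK: "C \<in> K" and Cc: "C = {c}" using singK[OF cB] by blast
      have cl: "\<forall>u\<in>{c}. \<forall>w\<in>V - T. adj E ends u w \<longrightarrow> w \<in> {c}"
      proof (intro ballI impI)
        fix u w assume u: "u \<in> {c}" and wV: "w \<in> V - T" and uw: "adj E ends u w"
        show "w \<in> {c}"
        proof (cases "w \<in> S")
          case True
          hence "w = s" using wV T_def by blast
          thus ?thesis using nadj uw u by blast
        next
          case False
          hence "w \<in> V - S" using wV by blast
          thus ?thesis using comp_closed[OF Kcomp[OF CK] _ _ uw] u Cc by blast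
        qed
      qed
      have "\<not> connected_on E ends (V - T)"
      proof (rule not_conn[where x=c and y=s, OF _ _ _ _ cl])
        show "{c} \<subseteq> V - T" "c \<in> {c}" using cB T_def by auto
        show "s \<in> V - T" using sS SV T_def by auto
        show "s \<notin> {c}" using sS cB by auto
      qed
      thus False using con by blast
    qed
    have "simple_is_K33 V E ends"
      unfolding simple_is_K33_def
    proof (intro exI conjI)
      show "S \<inter> (V - S) = {}" by blast
      show "S \<union> (V - S) = V" using SV by blast
      show "card S = 3" using cS .
      show "card (V - S) = 3" using cardB .
      show "\<forall>u\<in>V. \<forall>v\<in>V. adj E ends u v = (u \<in> S \<and> v \<in> V - S \<or> u \<in> V - S \<and> v \<in> S)"
      proof (intro ballI)
        fix u v assume uV: "u \<in> V" and vV: "v \<in> V"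
        show "adj E ends u v = (u \<in> S \<and> v \<in> V - S \<or> u \<in> V - S \<and> v \<in> S)"
        proof (cases "u \<in> S"; cases "v \<in> S")
          assume h: "u \<in> S" "v \<in> S"
          have "\<not> adj E ends u v" using noSS[OF h] .
          thus ?thesis using h by simp
        next
          assume h: "u \<in> S" "v \<notin> S"
          have vB: "v \<in> V - S" using h vV by simp
          have "adj E ends u v" using adj_sym[OF allBS[OF vB h(1)]] .
          thus ?thesis using h vB by simp
        next
          assume h: "u \<notin> S" "v \<in> S"
          have uB: "u \<in> V - S" using h uV by simp
          have "adj E ends u v" using allBS[OF uB h(2)] .
          thus ?thesis using h uB by simp
        next
          assume h: "u \<notin> S" "v \<notin> S"
          have uB: "u \<in> V - S" using h uV by simp
          have vB: "v \<in> V - S" using h vV by simp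
          have "\<not> adj E ends u v" using noBB[OF uB vB] .
          thus ?thesis using h by simp
        qed
      qed
    qed
    thus ?thesis by blast
  qed
qed

end
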